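(* Let $N\ge 1$ be an integer and let $\mu$ be a real number with $-N<\mu<1$. Then every complex root of the polynomial $$p(\lambda)=\lambda^{N}-\frac{\mu}{N}\big(\lambda^{N-1}+\lambda^{N-2}+\cdots+\lambda+1\big)$$ lies in the open unit disc $\{\lambda\in\mathbb{C}:|\lambda|<1\}$.
   Context: This is the characteristic polynomial $\lambda^N-\mu(a_1\lambda^{N-1}+\cdots+a_N)$ of the delayed feedback control for a fixed point (1-cycle) with multiplier $\mu$, using uniform coefficients $a_1=\cdots=a_N=1/N$; the claim is that this polynomial is Schur stable for all $\mu\in(-N,1)$. *)

theory Defs
  imports Complex_Main
begin

end

theory Submission
  imports Defs
begin

lemma unit_align:
  fixes u :: complex and a b :: real
  assumes "a > 0" "b > 0" "cmod u = 1" "cmod (of_real a * u + of_real b) = a + b"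
  shows "u = 1"
proof -
  have h1: "(Re u)^2 + (Im u)^2 = 1" using assms(3) cmod_power2[of u] by simp
  have "(cmod (of_real a * u + of_real b))^2 = (a * Re u + b)^2 + (a * Im u)^2"
    by (simp add: cmod_power2)
  hence "(a * Re u + b)^2 + (a * Im u)^2 = (a+b)^2" using assms(4) by simp
  hence "a^2 * ((Re u)^2 + (Im u)^2) + 2*a*b*Re u + b^2 = (a+b)^2"
    by (simp add: power2_eq_square algebra_simps)
  hence "a^2 + 2*a*b*Re u + b^2 = (a+b)^2" using h1 by simp
  hence "2*a*b*Re u = 2*a*b" by (simp add: power2_eq_square algebra_simps)
  hence r: "Re u = 1" using assms(1,2) by simp
  hence "Im u = 0" using h1 by simp
  thus ?thesis using r by (simp add: complex_eq_iff)
qed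

theorem mainTheorem3:
  fixes N :: nat and mu :: real and z :: complex
  assumes "N \<ge> 1"
    and "- real N < mu" and "mu < 1"
    and "z ^ N - complex_of_real (mu / real N) * (\<Sum>k<N. z ^ k) = 0"
  shows "cmod z < 1"
proof (rule ccontr)
  assume "\<not> cmod z < 1"
  hence r1: "cmod z \<ge> 1" by simp
  define c where "c = mu / real N"
  have Npos: "real N > 0" using assms(1) by simp
  have cgt: "c > -1" using assms(2) Npos by (simp add: c_def field_simps)
  have clt: "c * N < 1" using assms(3) Npos by (simp add: c_def)
  have eq: "z ^ N = of_real c * (\<Sum>k<N. z ^ k)" using assms(4) by (simp add: c_def)
  have zN: "cmod (z^N) = cmod z ^ N" by (simp add: norm_power)
  have pN: "cmod z ^ N \<ge> 1" using r1 by simp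
  consider "c = 0" | "c > 0" | "c < 0" by linarith
  thus False
  proof cases
    case 1
    hence "z ^ N = 0" using eq by simp
    hence "z = 0" by simp
    thus False using r1 by simp
  next
    case 2
    have "cmod (\<Sum>k<N. z ^ k) \<le> (\<Sum>k<N. cmod z ^ k)"
      by (metis (no_types, lifting) norm_power norm_sum sum.cong)
    also have "\<dots> \<le> (\<Sum>k<N. cmod z ^ N)"
      by (rule sum_mono) (use r1 in \<open>auto intro: power_increasing\<close>)
    also have "\<dots> = N * cmod z ^ N" by simp
    finally have s: "cmod (\<Sum>k<N. z ^ k) \<le> N * cmod z ^ N" .
    have "cmod z ^ N = c * cmod (\<Sum>k<N. z ^ k)" using eq zN 2
      by (metis abs_of_pos norm_mult norm_of_real)
    also have "\<dots> \<le> c * (N * cmod z ^ N)" using s 2 by (simp add: mult_left_mono)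
    also have "\<dots> = (c * N) * cmod z ^ N" by simp
    also have "\<dots> < cmod z ^ N" using clt pN by simp
    finally show False by simp
  next
    case 3
    define a where "a = 1 + c"
    define b where "b = - c"
    have a0: "a > 0" and b0: "b > 0" and ab: "a + b = 1" using cgt 3 by (auto simp: a_def b_def)
    have "(z - 1) * z ^ N = of_real c * ((z - 1) * (\<Sum>k<N. z ^ k))" using eq by simp
    also have "\<dots> = of_real c * (z^N - 1)" by (simp add: power_diff_1_eq)
    finally have "z * z^N = of_real a * z^N + of_real b"
      by (simp add: a_def b_def algebra_simps)
    hence key: "z * z^N = of_real a * z^N + of_real b" .
    have "cmod (of_real a * z^N + of_real b) \<le> a * cmod z ^ N + b"
      using a0 b0 norm_triangle_ineq[of "of_real a * z^N" "of_real b"]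
      by (simp add: norm_mult norm_power)
    also have "\<dots> \<le> a * cmod z ^ N + b * cmod z ^ N" using b0 pN by simp
    also have "\<dots> = cmod z ^ N" using ab by (metis distrib_right mult_1)
    finally have "cmod z * cmod z ^ N \<le> cmod z ^ N" using key by (metis norm_mult norm_power)
    hence "cmod z \<le> 1" using pN by simp
    hence z1: "cmod z = 1" using r1 by simp
    hence u1: "cmod (z^N) = 1" by (simp add: norm_power)
    have "cmod (of_real a * z^N + of_real b) = a + b" using key z1 u1 ab by (metis mult_1 norm_mult)
    hence "z^N = 1" using unit_align a0 b0 u1 by blast
    hence "z = 1" using key ab by (metis mult.right_neutral mult_1 of_real_1 of_real_add)
    hence "(1::complex) = of_real c * of_nat N" using eq by simp
    hence "1 = c * N" by (metis of_real_1 of_real_eq_iff of_real_mult of_real_of_nat_eq)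
    thus False using 3 Npos by (smt (verit) mult_neg_pos)
  qed
qed

end
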